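(* Fix $p\in(0,1]$ and let $(G_n)$ be a sequence of graphs with $\min_{u\in V}\delta_u=\omega(\log n)$. For each $n$ run the $(1,p,\mathcal B)$-Edge-Majority dynamics (equivalently the $(1,p,\mathcal B)$-Node-Majority dynamics) on $G_n$ from an arbitrary initial configuration $\mathbf X^{(0)}$. Then there exists $T=T(p)$ such that $\Pr(\tau\le T)=1-o(1)$.
   Context: $G_n=(V,E)$, $V=\{1,\dots,n\}$, $N(u)$ neighbourhood, $\delta_u=|N(u)|$, $\mathrm{vol}(S)=\sum_{v\in S}\delta_v$; asymptotics as $n\to\infty$. States in $\{\mathcal R,\mathcal B\}$; $B^{(t)}$ is the set of $\mathcal B$ nodes at round $t$, and $\tau=\inf\{t\ge0:\mathrm{vol}(B^{(t)})/\mathrm{vol}(V)>1/2\}$. $(1,p,\mathcal B)$-Edge-Majority: in each round $t\ge1$ every node $u$ independently picks one neighbour $v$ uniformly at random; with probability $p$ (independently) $u$ takes state $\mathcal B$, and otherwise it copies the state of $v$ at round $t-1$. *)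

theory Defs
  imports "HOL-Probability.Probability"
begin

text \<open>Graphs G_n on vertex set V = {1..n}, given by an adjacency predicate E.
  A configuration is a map nat => bool, True meaning state B, False meaning state R.\<close>

definition nbhd :: "(nat \<Rightarrow> nat \<Rightarrow> bool) \<Rightarrow> nat \<Rightarrow> nat \<Rightarrow> nat set" where
  "nbhd E n u = {v \<in> {1..n}. E u v}"

definition deg :: "(nat \<Rightarrow> nat \<Rightarrow> bool) \<Rightarrow> nat \<Rightarrow> nat \<Rightarrow> nat" where
  "deg E n u = card (nbhd E n u)"

definition vol :: "(nat \<Rightarrow> nat \<Rightarrow> bool) \<Rightarrow> nat \<Rightarrow> nat set \<Rightarrow> real" where
  "vol E n S = (\<Sum>v\<in>S. real (deg E n v))"

definition blue :: "nat \<Rightarrow> (nat \<Rightarrow> bool) \<Rightarrow> nat set" where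
  "blue n X = {u \<in> {1..n}. X u}"

definition em_step :: "real \<Rightarrow> (nat \<Rightarrow> nat \<Rightarrow> bool) \<Rightarrow> nat \<Rightarrow> (nat \<Rightarrow> bool) \<Rightarrow> (nat \<Rightarrow> bool) pmf" where
  "em_step p E n X = Pi_pmf {1..n} False
     (\<lambda>u. bind_pmf (bernoulli_pmf p)
        (\<lambda>c. if c then return_pmf True else map_pmf X (pmf_of_set (nbhd E n u))))"

text \<open>Distribution of the trajectory (X^(0), ..., X^(t)) after t rounds, encoded as a map
  from times to configurations (entries at times > t are irrelevant).\<close>
fun em_traj :: "real \<Rightarrow> (nat \<Rightarrow> nat \<Rightarrow> bool) \<Rightarrow> nat \<Rightarrow> (nat \<Rightarrow> bool) \<Rightarrow> nat \<Rightarrow> (nat \<Rightarrow> nat \<Rightarrow> bool) pmf" where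
  "em_traj p E n X0 0 = return_pmf (\<lambda>_. X0)"
| "em_traj p E n X0 (Suc t) = bind_pmf (em_traj p E n X0 t)
     (\<lambda>\<omega>. map_pmf (\<lambda>Y. fun_upd \<omega> (Suc t) Y) (em_step p E n (\<omega> t)))"

definition tau_le :: "(nat \<Rightarrow> nat \<Rightarrow> bool) \<Rightarrow> nat \<Rightarrow> nat \<Rightarrow> (nat \<Rightarrow> nat \<Rightarrow> bool) set" where
  "tau_le E n T = {\<omega>. \<exists>t\<le>T. vol E n (blue n (\<omega> t)) / vol E n {1..n} > 1/2}"

end

theory Submission
  imports Defs "HOL-Real_Asymp.Real_Asymp"
begin

lemma vol_blue:
  "vol E n (blue n Y) = (\<Sum>u\<in>{1..n}. real (deg E n u) * (if Y u then 1 else 0))"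
  proof -
  have "vol E n (blue n Y) = (\<Sum>v\<in>{1..n}. if Y v then real (deg E n v) else 0)"
    unfolding vol_def blue_def by (rule sum.inter_filter) simp
  then show ?thesis by (simp add: if_distrib cong: if_cong)
qed

lemma comp_pmf:
  assumes p: "0 \<le> p" "p \<le> 1" and ne: "nbhd E n u \<noteq> {}"
  shows "pmf (bind_pmf (bernoulli_pmf p)
        (\<lambda>c. if c then return_pmf True else map_pmf X (pmf_of_set (nbhd E n u)))) True
     = p + (1 - p) * (card (nbhd E n u \<inter> {v. X v}) / card (nbhd E n u))"
proof -
  have fin: "finite (nbhd E n u)" unfolding nbhd_def by auto
  have "pmf (map_pmf X (pmf_of_set (nbhd E n u))) True = card (nbhd E n u \<inter> {v. X v}) / card (nbhd E n u)"
    using fin ne by (simp add: pmf_map measure_pmf_of_set vimage_def)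
  then show ?thesis using p by (simp add: pmf_bind integral_bernoulli_pmf algebra_simps)
qed

lemma double_count:
  assumes sym: "\<forall>u v. E u v = E v u"
  shows "(\<Sum>u\<in>{1..n}. real (card (nbhd E n u \<inter> {v. X v}))) = vol E n (blue n X)"
proof -
  have "(\<Sum>u\<in>{1..n}. real (card (nbhd E n u \<inter> {v. X v})))
      = (\<Sum>u\<in>{1..n}. \<Sum>v\<in>{1..n}. if E u v \<and> X v then 1 else 0)"
    by (intro sum.cong refl) (simp add: nbhd_def sum.If_cases Int_def conj_commute)
  also have "\<dots> = (\<Sum>v\<in>{1..n}. \<Sum>u\<in>{1..n}. if E u v \<and> X v then 1 else 0)"
    by (rule sum.swap)
  also have "\<dots> = (\<Sum>v\<in>{1..n}. if X v then real (deg E n v) else 0)"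
    by (intro sum.cong refl) (auto simp: deg_def nbhd_def sum.If_cases Int_def sym)
  also have "\<dots> = vol E n (blue n X)"
    unfolding vol_def blue_def by (rule sum.inter_filter[symmetric]) simp
  finally show ?thesis .
qed


lemma step_bound:
  assumes sym: "\<forall>u v. E u v = E v u" and p: "0 \<le> p" "p \<le> 1" and m: "0 < m"
    and degm: "\<forall>u\<in>{1..n}. m \<le> real (deg E n u)" and n: "1 \<le> n" and eps: "0 \<le> \<epsilon>"
  shows "measure_pmf.prob (em_step p E n X)
     {Y. vol E n (blue n Y) \<le> p * vol E n {1..n} + (1-p) * vol E n (blue n X) - \<epsilon> * vol E n {1..n}}
     \<le> exp (-2*\<epsilon>^2*m)"
proof -
  define d where "d u = real (deg E n u)" for u
  define Xr where "Xr u Y = d u * (if Y u then 1 else 0)" for u and Y :: "nat \<Rightarrow> bool"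
  define D where "D = vol E n {1..n}"
  define c where "c u = real (card (nbhd E n u \<inter> {v. X v}))" for u
  have D: "D = (\<Sum>u\<in>{1..n}. d u)" by (simp add: D_def vol_def d_def)
  have dpos: "d u > 0" if "u \<in> {1..n}" for u using degm m that d_def by force
  have ne: "nbhd E n u \<noteq> {}" if "u \<in> {1..n}" for u
    using dpos[OF that] by (auto simp: d_def deg_def)
  have dle: "d u \<le> real n" if "u \<in> {1..n}" for u
  proof -
    have "card (nbhd E n u) \<le> card {1..n}" by (rule card_mono) (auto simp: nbhd_def)
    then show ?thesis by (simp add: d_def deg_def)
  qed
  have exp_u: "measure_pmf.expectation (em_step p E n X) (Xr u) = d u * (p + (1-p) * (c u / d u))"
    if u: "u \<in> {1..n}" for u
  proof -
    let ?q = "bind_pmf (bernoulli_pmf p)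
        (\<lambda>c. if c then return_pmf True else map_pmf X (pmf_of_set (nbhd E n u)))"
    have "measure_pmf.expectation (em_step p E n X) (Xr u)
        = measure_pmf.expectation (map_pmf (\<lambda>Y. Y u) (em_step p E n X)) (\<lambda>b. d u * (if b then 1 else 0))"
      unfolding integral_map_pmf by (rule arg_cong[where f="measure_pmf.expectation _"]) (simp add: Xr_def fun_eq_iff)
    also have "map_pmf (\<lambda>Y. Y u) (em_step p E n X) = ?q"
      using u by (simp add: em_step_def Pi_pmf_component)
    also have "measure_pmf.expectation ?q (\<lambda>b. d u * (if b then 1 else 0)) = d u * pmf ?q True"
      by (subst integral_measure_pmf_real[where A="{True}"]) (auto split: if_splits)
    also have "pmf ?q True = p + (1-p) * (c u / d u)"
      using comp_pmf[OF p ne[OF u]] by (simp add: c_def d_def deg_def)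
    finally show ?thesis .
  qed
  define \<mu> where "\<mu> = (\<Sum>u\<in>{1..n}. measure_pmf.expectation (em_step p E n X) (Xr u))"
  have \<mu>_eq: "\<mu> = p * D + (1-p) * vol E n (blue n X)"
  proof -
    have "\<mu> = (\<Sum>u\<in>{1..n}. p * d u + (1-p) * c u)"
      unfolding \<mu>_def
    proof (intro sum.cong refl)
      fix u assume u: "u \<in> {1..n}"
      have "d u \<noteq> 0" using dpos[OF u] by simp
      then show "measure_pmf.expectation (em_step p E n X) (Xr u) = p * d u + (1-p) * c u"
        by (subst exp_u[OF u]) (simp add: field_simps)
    qed
    also have "\<dots> = p * D + (1-p) * (\<Sum>u\<in>{1..n}. c u)"
      by (simp add: sum.distrib sum_distrib_left D)
    also have "(\<Sum>u\<in>{1..n}. c u) = vol E n (blue n X)"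
      unfolding c_def by (rule double_count[OF sym])
    finally show ?thesis .
  qed
  interpret H: Hoeffding_ineq "measure_pmf (em_step p E n X)" "{1..n}" Xr "\<lambda>_. 0" d \<mu>
  proof unfold_locales
    show "prob_space.indep_vars (measure_pmf (em_step p E n X)) (\<lambda>_. borel) Xr {1..n}"
    proof -
      have "prob_space.indep_vars (measure_pmf (em_step p E n X)) (\<lambda>_. count_space UNIV) (\<lambda>x f. f x) {1..n}"
        unfolding em_step_def by (rule indep_vars_Pi_pmf) simp
      from prob_space.indep_vars_compose2[OF measure_pmf.prob_space_axioms this,
          of "\<lambda>u b. d u * (if b then 1 else 0)" "\<lambda>_. borel"]
      moreover have "Xr = (\<lambda>i x. d i * (if x i then 1 else 0))" by (simp add: fun_eq_iff Xr_def)
      ultimately show ?thesis by simp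
    qed
  next
    fix u assume u: "u \<in> {1..n}"
    have "0 < d u" by (rule dpos[OF u])
    then show "AE x in measure_pmf (em_step p E n X). Xr u x \<in> {0..d u}"
      by (intro AE_I2) (auto simp: Xr_def)
  qed (auto simp: \<mu>_def)
  define S where "S = (\<Sum>u\<in>{1..n}. (d u - 0)^2)"
  have dne: "d u \<noteq> 0" if "u \<in> {1..n}" for u using dpos[OF that] by simp
  have Spos: "S > 0" unfolding S_def using n by (intro sum_pos) (auto simp: dne)
  have "S \<le> (\<Sum>u\<in>{1..n}. real n * d u)" unfolding S_def
    using dpos dle by (intro sum_mono) (auto simp: power2_eq_square intro!: mult_right_mono)
  also have "\<dots> = real n * D" by (simp add: D sum_distrib_left)
  finally have S1: "S \<le> real n * D" .
  have nmD: "real n * m \<le> D"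
  proof -
    have "real n * m = (\<Sum>u\<in>{1..n}. m)" by simp
    also have "\<dots> \<le> D" unfolding D using degm by (intro sum_mono) (auto simp: d_def)
    finally show ?thesis .
  qed
  have D0: "0 \<le> D" using nmD m by (smt (verit) mult_nonneg_nonneg of_nat_0_le_iff)
  have "S * m \<le> real n * D * m" using S1 m by (simp add: mult_right_mono)
  also have "\<dots> = (real n * m) * D" by (simp add: mult_ac)
  also have "\<dots> \<le> D * D" using nmD D0 by (rule mult_right_mono)
  finally have SmD: "S * m \<le> D * D" .
  have "S * (\<epsilon>^2 * m) \<le> (\<epsilon>^2) * (D * D)"
    using mult_left_mono[OF SmD, of "\<epsilon>^2"] by (simp add: mult_ac)
  hence key: "2*\<epsilon>^2*m \<le> 2 * (\<epsilon> * D)^2 / S" using Spos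
    by (simp add: field_simps power2_eq_square)
  have "measure_pmf.prob (em_step p E n X)
     {Y. vol E n (blue n Y) \<le> p * vol E n {1..n} + (1-p) * vol E n (blue n X) - \<epsilon> * vol E n {1..n}}
     = measure_pmf.prob (em_step p E n X) {x \<in> space (measure_pmf (em_step p E n X)). (\<Sum>i\<in>{1..n}. Xr i x) \<le> \<mu> - \<epsilon> * D}"
    by (simp add: \<mu>_eq vol_blue Xr_def d_def D_def)
  also have "\<dots> \<le> exp (-2 * (\<epsilon> * D)^2 / S)"
    unfolding S_def by (intro H.Hoeffding_ineq_le mult_nonneg_nonneg eps D0) (use Spos S_def in simp)
  also have "\<dots> \<le> exp (-2*\<epsilon>^2*m)" using key by simp
  finally show ?thesis .
qed


lemma bind_fail:
  fixes M :: "'a pmf" and f :: "'a \<Rightarrow> 'b pmf"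
  assumes a: "measure_pmf.prob M {x. \<not> P x} \<le> a"
    and q: "\<And>x. x \<in> set_pmf M \<Longrightarrow> P x \<Longrightarrow> measure_pmf.prob (f x) B \<le> q" and q0: "0 \<le> q"
  shows "measure_pmf.prob (bind_pmf M f) B \<le> a + q"
proof -
  have "measure_pmf.prob (bind_pmf M f) B = measure_pmf.expectation M (\<lambda>x. measure_pmf.prob (f x) B)"
    unfolding measure_pmf_bind
    by (rule measure_pmf.measure_bind[where N="count_space UNIV"]) (auto simp: measure_pmf_in_subprob_space)
  also have "\<dots> \<le> measure_pmf.expectation M (\<lambda>x. indicator {x. \<not> P x} x + q)"
  proof (rule integral_mono_AE)
    show "integrable (measure_pmf M) (\<lambda>x. measure_pmf.prob (f x) B)"
      by (rule measure_pmf.integrable_const_bound[where B=1]) auto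
    show "integrable (measure_pmf M) (\<lambda>x. indicator {x. \<not> P x} x + q)"
      by (rule measure_pmf.integrable_const_bound[where B="1 + \<bar>q\<bar>"]) (auto simp: indicator_def)
    show "AE x in measure_pmf M. measure_pmf.prob (f x) B \<le> indicator {x. \<not> P x} x + q"
      using q q0 by (intro AE_pmfI) (auto simp: indicator_def intro: order.trans[OF measure_pmf.prob_le_1])
  qed
  also have "\<dots> = measure_pmf.prob M {x. \<not> P x} + q"
    by (subst Bochner_Integration.integral_add) (auto intro!: measure_pmf.integrable_const_bound[where B=1])
  also have "\<dots> \<le> a + q" using a by simp
  finally show ?thesis .
qed


lemma vol_nonneg: "0 \<le> vol E n S"
  unfolding vol_def by (simp add: sum_nonneg)

lemma traj_bound:
  assumes sym: "\<forall>u v. E u v = E v u" and p: "0 \<le> p" "p \<le> 1" and m: "0 < m"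
    and degm: "\<forall>u\<in>{1..n}. m \<le> real (deg E n u)" and n: "1 \<le> n" and eps: "0 \<le> \<epsilon>"
  shows "measure_pmf.prob (em_traj p E n X0 t)
     {\<omega>. \<not> ((1 - (1-p)^t - real t * \<epsilon>) * vol E n {1..n} \<le> vol E n (blue n (\<omega> t)))}
     \<le> real t * exp (-2*\<epsilon>^2*m)"
proof (induction t)
  case 0
  show ?case by (simp add: vol_nonneg indicator_def)
next
  case (Suc t)
  define D where "D = vol E n {1..n}"
  have D0: "0 \<le> D" by (simp add: D_def vol_nonneg)
  let ?e = "exp (-2*\<epsilon>^2*m)"
  have "measure_pmf.prob (em_traj p E n X0 (Suc t))
     {\<omega>. \<not> ((1 - (1-p)^Suc t - real (Suc t) * \<epsilon>) * D \<le> vol E n (blue n (\<omega> (Suc t))))}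
     \<le> real t * ?e + ?e"
    unfolding em_traj.simps
  proof (rule bind_fail[where P="\<lambda>\<omega>. (1 - (1-p)^t - real t * \<epsilon>) * D \<le> vol E n (blue n (\<omega> t))"])
    show "measure_pmf.prob (em_traj p E n X0 t)
        {x. \<not> ((1 - (1-p)^t - real t * \<epsilon>) * D \<le> vol E n (blue n (x t)))} \<le> real t * ?e"
      using Suc.IH by (simp add: D_def)
    show "0 \<le> ?e" by simp
    fix \<omega> assume P: "(1 - (1-p)^t - real t * \<epsilon>) * D \<le> vol E n (blue n (\<omega> t))"
    have sub: "(\<lambda>Y. fun_upd \<omega> (Suc t) Y) -` {\<omega>'. \<not> ((1 - (1-p)^Suc t - real (Suc t) * \<epsilon>) * D \<le> vol E n (blue n (\<omega>' (Suc t))))}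
       \<subseteq> {Y. vol E n (blue n Y) \<le> p * D + (1-p) * vol E n (blue n (\<omega> t)) - \<epsilon> * D}"
    proof
      fix Y assume "Y \<in> (\<lambda>Y. fun_upd \<omega> (Suc t) Y) -` {\<omega>'. \<not> ((1 - (1-p)^Suc t - real (Suc t) * \<epsilon>) * D \<le> vol E n (blue n (\<omega>' (Suc t))))}"
      hence lt: "vol E n (blue n Y) < (1 - (1-p)^Suc t - real (Suc t) * \<epsilon>) * D" by simp
      have "(1-p) * ((1 - (1-p)^t - real t * \<epsilon>) * D) \<le> (1-p) * vol E n (blue n (\<omega> t))"
        using P p by (intro mult_left_mono) auto
      moreover have "p * (real t * \<epsilon> * D) \<ge> 0" using p eps D0 by simp
      ultimately have "(1 - (1-p)^Suc t - real (Suc t) * \<epsilon>) * D \<le> p * D + (1-p) * vol E n (blue n (\<omega> t)) - \<epsilon> * D"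
        by (simp add: algebra_simps)
      with lt show "Y \<in> {Y. vol E n (blue n Y) \<le> p * D + (1-p) * vol E n (blue n (\<omega> t)) - \<epsilon> * D}" by simp
    qed
    show "measure_pmf.prob (map_pmf (\<lambda>Y. fun_upd \<omega> (Suc t) Y) (em_step p E n (\<omega> t)))
        {\<omega>'. \<not> ((1 - (1-p)^Suc t - real (Suc t) * \<epsilon>) * D \<le> vol E n (blue n (\<omega>' (Suc t))))} \<le> ?e"
    proof -
      have "measure_pmf.prob (em_step p E n (\<omega> t)) ((\<lambda>Y. fun_upd \<omega> (Suc t) Y) -` {\<omega>'. \<not> ((1 - (1-p)^Suc t - real (Suc t) * \<epsilon>) * D \<le> vol E n (blue n (\<omega>' (Suc t))))})
          \<le> measure_pmf.prob (em_step p E n (\<omega> t)) {Y. vol E n (blue n Y) \<le> p * D + (1-p) * vol E n (blue n (\<omega> t)) - \<epsilon> * D}"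
        by (rule measure_pmf.finite_measure_mono[OF sub]) simp
      also have "\<dots> \<le> ?e" using step_bound[OF sym p m degm n eps, of "\<omega> t"] by (simp add: D_def)
      finally show ?thesis by simp
    qed
  qed
  then show ?case by (simp add: D_def algebra_simps)
qed


lemma real_lim: "(c::real) > 0 \<Longrightarrow> ((\<lambda>n. 1 - K * exp(-c * ln (real n))) \<longlongrightarrow> 1) sequentially"
  by real_asymp

theorem proposition6p1:
  fixes p :: real
  assumes "0 < p" and "p \<le> 1"
  shows "\<exists>T::nat. \<forall>(G :: nat \<Rightarrow> nat \<Rightarrow> nat \<Rightarrow> bool) (X0 :: nat \<Rightarrow> nat \<Rightarrow> bool).
     (\<forall>n u v. G n u v = G n v u) \<longrightarrow>
     (\<forall>n u. \<not> G n u u) \<longrightarrow>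
     (\<forall>C>0. eventually (\<lambda>n. \<forall>u\<in>{1..n}. real (deg (G n) n u) \<ge> C * ln (real n)) sequentially) \<longrightarrow>
     (\<lambda>n. measure_pmf.prob (em_traj p (G n) n (X0 n) T) (tau_le (G n) n T))
       \<longlonglongrightarrow> 1"
proof -
  have p: "0 \<le> p" "p \<le> 1" using assms by auto
  obtain T where T: "(1-p)^T < 1/4" using real_arch_pow_inv[of "1/4" "1-p"] assms by auto
  define \<epsilon> where "\<epsilon> = 1 / (8 * (real T + 1))"
  have eps: "0 < \<epsilon>" by (simp add: \<epsilon>_def)
  have Teps: "real T * \<epsilon> \<le> 1/8" by (simp add: \<epsilon>_def field_simps)
  define c where "c = 2 * \<epsilon>^2"
  have c: "c > 0" using eps by (simp add: c_def)
  show ?thesis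
  proof (intro exI allI impI)
    fix G :: "nat \<Rightarrow> nat \<Rightarrow> nat \<Rightarrow> bool" and X0 :: "nat \<Rightarrow> nat \<Rightarrow> bool"
    assume sym: "\<forall>n u v. G n u v = G n v u" and "\<forall>n u. \<not> G n u u"
      and dg: "\<forall>C>0. eventually (\<lambda>n. \<forall>u\<in>{1..n}. real (deg (G n) n u) \<ge> C * ln (real n)) sequentially"
    let ?f = "\<lambda>n. measure_pmf.prob (em_traj p (G n) n (X0 n) T) (tau_le (G n) n T)"
    have ev1: "eventually (\<lambda>n. \<forall>u\<in>{1..n}. real (deg (G n) n u) \<ge> ln (real n)) sequentially"
      using dg[rule_format, of 1] by simp
    have ev2: "eventually (\<lambda>n. (3::nat) \<le> n) sequentially" by (rule eventually_ge_at_top)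
    have low: "eventually (\<lambda>n. 1 - real T * exp (-c * ln (real n)) \<le> ?f n) sequentially"
      using ev1 ev2
    proof eventually_elim
      case (elim n)
      have m: "0 < ln (real n)" using elim(2) by simp
      have degm: "\<forall>u\<in>{1..n}. ln (real n) \<le> real (deg (G n) n u)" using elim(1) by simp
      have n1: "1 \<le> n" using elim(2) by simp
      have symn: "\<forall>u v. G n u v = G n v u" using sym by simp
      define D where "D = vol (G n) n {1..n}"
      have "ln (real n) \<le> real (deg (G n) n 1)" using degm n1 by simp
      hence "0 < real (deg (G n) n 1)" using m by linarith
      also have "\<dots> \<le> D" unfolding D_def vol_def using n1
        by (intro member_le_sum) auto
      finally have Dpos: "0 < D" .
      define bad where "bad = {\<omega>. \<not> ((1 - (1-p)^T - real T * \<epsilon>) * vol (G n) n {1..n} \<le> vol (G n) n (blue n (\<omega> T)))}"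
      have pb: "measure_pmf.prob (em_traj p (G n) n (X0 n) T) bad \<le> real T * exp (-2*\<epsilon>^2*ln (real n))"
        unfolding bad_def by (rule traj_bound[OF symn p m degm n1 less_imp_le[OF eps]])
      have sub: "UNIV - bad \<subseteq> tau_le (G n) n T"
      proof
        fix \<omega> assume "\<omega> \<in> UNIV - bad"
        hence w: "(1 - (1-p)^T - real T * \<epsilon>) * D \<le> vol (G n) n (blue n (\<omega> T))"
          by (simp add: bad_def D_def)
        have "(1/2) * D < (1 - (1-p)^T - real T * \<epsilon>) * D"
          using T Teps Dpos by (intro mult_strict_right_mono) auto
        with w have "(1/2) * D < vol (G n) n (blue n (\<omega> T))" by linarith
        hence "1/2 < vol (G n) n (blue n (\<omega> T)) / D" using Dpos by (simp add: field_simps)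
        then show "\<omega> \<in> tau_le (G n) n T" unfolding tau_le_def D_def by auto
      qed
      have "1 - measure_pmf.prob (em_traj p (G n) n (X0 n) T) bad
          = measure_pmf.prob (em_traj p (G n) n (X0 n) T) (UNIV - bad)"
        using measure_pmf.prob_compl[of bad "em_traj p (G n) n (X0 n) T"] by simp
      also have "\<dots> \<le> ?f n" by (rule measure_pmf.finite_measure_mono[OF sub]) simp
      finally show ?case using pb by (simp add: c_def)
    qed
    have up: "eventually (\<lambda>n. ?f n \<le> 1) sequentially" by simp
    show "?f \<longlonglongrightarrow> 1"
      by (rule tendsto_sandwich[OF low up real_lim[OF c] tendsto_const])
  qed
qed

end
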